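(* Let $a$ be a positive integer and define $(U_n)_{n\ge1}$ by $U_1=a$, $U_2=3a$ and $U_{n+2}=U_{n+1}+U_n$ for $n\ge1$. Then $(U_n)$ is exactly realizable.
   Context: For a homeomorphism $f:X\to X$ of a compact metric space $X$, let $\mathrm{Per}_n(f)=\#\{x\in X\mid f^n x=x\}$. A sequence $(U_n)_{n\ge1}$ of non-negative integers is called exactly realizable if there exist a compact metric space $X$ and a homeomorphism $f:X\to X$ with $\mathrm{Per}_n(f)=U_n$ for all $n\ge1$. *)

theory Defs
  imports "HOL-Analysis.Analysis"
begin

definition Per :: "'a metric \<Rightarrow> ('a \<Rightarrow> 'a) \<Rightarrow> nat \<Rightarrow> nat" where
  "Per m f n = card {x \<in> mspace m. (f ^^ n) x = x}"

definition realizes :: "'a metric \<Rightarrow> ('a \<Rightarrow> 'a) \<Rightarrow> (nat \<Rightarrow> nat) \<Rightarrow> bool" where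
  "realizes m f U \<longleftrightarrow>
     compact_space (mtopology_of m) \<and>
     homeomorphic_map (mtopology_of m) (mtopology_of m) f \<and>
     (\<forall>n\<ge>1. finite {x \<in> mspace m. (f ^^ n) x = x} \<and> Per m f n = U n)"

text \<open>Every compact metric space has cardinality at most the
  continuum, hence is isometric to a metric space whose carrier is a subset of the reals;
  so quantifying over metric spaces with carrier in type real loses no generality.\<close>
definition exactly_realizable :: "(nat \<Rightarrow> nat) \<Rightarrow> bool" where
  "exactly_realizable U \<longleftrightarrow> (\<exists>(m :: real metric) f. realizes m f U)"

end

theory Submission
  imports Defs
begin

definition rr :: "nat \<Rightarrow> real" where "rr k = 1 / (real k + 2)"
definition ff :: "(nat\<Rightarrow>nat) \<Rightarrow> real \<Rightarrow> real" where
  "ff g y = (if y = 0 then 0 else rr (g (nat \<lfloor>1/y\<rfloor> - 2)))"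

lemma rr_pos: "rr k > 0" by (simp add: rr_def)
lemma rr_inj: "rr j = rr k \<longleftrightarrow> j = k" by (simp add: rr_def)
lemma rr_less: "rr j < rr k \<longleftrightarrow> k < j" by (simp add: rr_def divide_simps)
lemma ff_rr: "ff g (rr k) = rr (g k)"
proof -
  have "1 / rr k = real k + 2" by (simp add: rr_def)
  hence "\<lfloor>1 / rr k\<rfloor> = int k + 2" by simp
  thus ?thesis using rr_pos[of k] by (simp add: ff_def nat_add_distrib)
qed
lemma ff_0: "ff g 0 = 0" by (simp add: ff_def)
lemma ff_pow: "(ff g ^^ n) (rr k) = rr ((g ^^ n) k)"
  by (induction n) (auto simp: ff_rr)
lemma ff_pow0: "(ff g ^^ n) 0 = 0"
  by (induction n) (auto simp: ff_0)

lemma rr_lim: "rr \<longlonglongrightarrow> 0"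
proof -
  have "(\<lambda>k. 1 / (real k + 2)) \<longlonglongrightarrow> 0"
    using LIMSEQ_ignore_initial_segment[OF lim_inverse_n', of 2]
    by (simp add: add.commute)
  thus ?thesis by (simp add: rr_def[abs_def])
qed

lemma aux_ineq: fixes x y :: real assumes "0 < y" "y + 1 \<le> x"
  shows "1/x - 1/(x+1) \<le> 1/y - 1/x"
proof -
  have x: "x > 0" using assms by linarith
  have "1/x - 1/(x+1) = 1/(x*(x+1))" using x by (simp add: field_simps)
  also have "\<dots> \<le> 1/(x*y)"
    using assms x by (intro divide_left_mono mult_left_mono) auto
  also have "\<dots> \<le> (x - y)/(x*y)"
    using assms x by (intro divide_right_mono) auto
  also have "\<dots> = 1/y - 1/x" using assms x by (simp add: field_simps)
  finally show ?thesis .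
qed

lemma rr_iso: "\<bar>rr j - rr k\<bar> < rr k - rr (Suc k) \<Longrightarrow> j = k"
proof (rule ccontr)
  assume a: "\<bar>rr j - rr k\<bar> < rr k - rr (Suc k)" and "j \<noteq> k"
  then consider "j < k" | "j > k" by linarith
  then show False
  proof cases
    case 1
    have "1/(real k + 2) - 1/((real k + 2) + 1) \<le> 1/(real j + 2) - 1/(real k + 2)"
      using 1 by (intro aux_ineq) auto
    then have "rr k - rr (Suc k) \<le> rr j - rr k" by (simp add: rr_def add_ac)
    then show False using a by linarith
  next
    case 2
    then have "rr j \<le> rr (Suc k)" using rr_less[of j "Suc k"] by (cases "j = Suc k") auto
    then show False using a rr_less[of k j] 2 by linarith
  qed
qed

lemma fin_small: "finite {k. rr k \<ge> e}" if "e > 0" for e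
proof -
  obtain N :: nat where "1 / e < N" using reals_Archimedean2 by blast
  have "k < N" if "rr k \<ge> e" for k
  proof -
    have "e * (real k + 2) \<le> 1" using that \<open>e > 0\<close> by (simp add: rr_def divide_simps)
    also have "1 < e * real N" using \<open>1 / e < N\<close> \<open>e > 0\<close> by (simp add: divide_simps mult.commute)
    finally have "real k + 2 < real N" using \<open>e > 0\<close> by (simp add: mult_less_cancel_left_pos)
    thus ?thesis by linarith
  qed
  hence "{k. rr k \<ge> e} \<subseteq> {..<N}" by auto
  thus ?thesis using finite_subset by blast
qed

lemma cont_ff:
  assumes "inj g"
  shows "continuous_on (insert 0 (range rr)) (ff g)"
  unfolding continuous_on_iff
proof (intro ballI allI impI)
  fix x e :: real assume x: "x \<in> insert 0 (range rr)" and e: "e > 0"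
  show "\<exists>d>0. \<forall>x'\<in>insert 0 (range rr). dist x' x < d \<longrightarrow> dist (ff g x') (ff g x) < e"
  proof (cases "x = 0")
    case True
    have "finite (g -` {k. rr k \<ge> e})" using fin_small[OF e] assms finite_vimageI by blast
    then obtain M where M: "g -` {k. rr k \<ge> e} \<subseteq> {..<M}"
      using finite_nat_iff_bounded by blast
    show ?thesis
    proof (intro exI conjI ballI impI)
      show "rr M > 0" by (rule rr_pos)
      fix x' assume "x' \<in> insert 0 (range rr)" "dist x' x < rr M"
      then consider "x' = 0" | k where "x' = rr k" "rr k < rr M"
        using True rr_pos by (auto simp: dist_real_def)
      then show "dist (ff g x') (ff g x) < e"
      proof cases
        case 1 then show ?thesis using True e by (simp add: ff_0)
      next
        case 2
        then have "k \<notin> {..<M}" by (auto simp: rr_less)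
        then have "rr (g k) < e" using M by force
        then show ?thesis using 2 True rr_pos[of "g k"] by (simp add: ff_rr ff_0 dist_real_def)
      qed
    qed
  next
    case False
    then obtain k where k: "x = rr k" using x by auto
    show ?thesis
    proof (intro exI conjI ballI impI)
      show "rr k - rr (Suc k) > 0" by (simp add: rr_less)
      fix x' assume "x' \<in> insert 0 (range rr)" "dist x' x < rr k - rr (Suc k)"
      then consider "x' = 0" "rr k < rr k - rr (Suc k)" | j where "x' = rr j" "\<bar>rr j - rr k\<bar> < rr k - rr (Suc k)"
        using k rr_pos by (auto simp: dist_real_def)
      then show "dist (ff g x') (ff g x) < e"
      proof cases
        case 1 then show ?thesis using rr_pos[of "Suc k"] by simp
      next
        case 2 then show ?thesis using rr_iso[of j k] k e by simp
      qed
    qed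
  qed
qed


lemma rr_ne0: "rr k \<noteq> 0" using rr_pos[of k] by simp

lemma realize_nat:
  assumes bg: "bij g" and fin: "\<And>n. n \<ge> 1 \<Longrightarrow> finite {k. (g^^n) k = k}"
  shows "realizes (submetric euclidean_metric (insert 0 (range rr))) (ff g)
           (\<lambda>n. Suc (card {k. (g^^n) k = k}))"
proof -
  define X where "X = insert 0 (range rr)"
  have top: "mtopology_of (submetric euclidean_metric X) = top_of_set X"
    by (simp add: mtopology_of_submetric)
  have cpt: "compact X" unfolding X_def by (rule compact_sequence_with_limit[OF rr_lim])
  have img: "ff g ` X = X"
  proof -
    have "ff g ` X = insert 0 (range (\<lambda>k. rr (g k)))" by (auto simp: X_def ff_0 ff_rr image_iff)
    also have "range (\<lambda>k. rr (g k)) = range rr" using bg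
      by (metis bij_is_surj image_image)
    finally show ?thesis by (simp add: X_def)
  qed
  have inj: "inj_on (ff g) X"
    unfolding inj_on_def X_def using bg
    by (auto simp: ff_0 ff_rr rr_inj rr_ne0 bij_is_inj inj_eq dest: sym)
  have homeo: "homeomorphic_map (top_of_set X) (top_of_set X) (ff g)"
  proof (rule continuous_imp_homeomorphic_map)
    show "continuous_map (top_of_set X) (top_of_set X) (ff g)"
      using cont_ff[OF bij_is_inj[OF bg]] img by (auto simp: X_def)
    show "compact_space (top_of_set X)" using cpt
      by (simp add: compact_space_subtopology)
    show "Hausdorff_space (top_of_set X)"
      by (metis Hausdorff_space_subtopology Hausdorff_space_euclidean)
  qed (use img inj in auto)
  have per: "{x \<in> X. (ff g ^^ n) x = x} = insert 0 (rr ` {k. (g^^n) k = k})" for n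
    by (auto simp: X_def ff_pow ff_pow0 rr_inj)
  show ?thesis
    unfolding realizes_def Per_def
  proof (intro conjI allI impI)
    show "compact_space (mtopology_of (submetric euclidean_metric (insert 0 (range rr))))"
      using cpt top by (simp add: X_def compact_space_subtopology)
    show "homeomorphic_map (mtopology_of (submetric euclidean_metric (insert 0 (range rr))))
          (mtopology_of (submetric euclidean_metric (insert 0 (range rr)))) (ff g)"
      using homeo top by (simp add: X_def)
    fix n :: nat assume n: "n \<ge> 1"
    show "finite {x \<in> mspace (submetric euclidean_metric (insert 0 (range rr))). (ff g ^^ n) x = x}"
      using per[of n] fin[OF n] by (simp add: X_def)
    have "card (insert 0 (rr ` {k. (g^^n) k = k})) = Suc (card {k. (g^^n) k = k})"
      using fin[OF n] by (simp add: card_image rr_inj inj_on_def image_iff rr_ne0[symmetric])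
    then show "card {x \<in> mspace (submetric euclidean_metric (insert 0 (range rr))). (ff g ^^ n) x = x}
       = Suc (card {k. (g^^n) k = k})"
      using per[of n] by (simp add: X_def)
  qed
qed


lemma realizes_cong: "realizes m f U \<Longrightarrow> (\<And>n. n \<ge> 1 \<Longrightarrow> U n = V n) \<Longrightarrow> realizes m f V"
  by (simp add: realizes_def)

lemma transfer:
  fixes h :: "'b \<Rightarrow> 'b"
  assumes ct: "countable T" and inf: "infinite T" and bh: "bij_betw h T T"
    and fin: "\<And>n. n \<ge> 1 \<Longrightarrow> finite {x\<in>T. (h^^n) x = x}"
    and U: "\<And>n. n \<ge> 1 \<Longrightarrow> U n = Suc (card {x\<in>T. (h^^n) x = x})"
  shows "exactly_realizable U"
proof -
  define e where "e = to_nat_on T"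
  define d where "d = from_nat_into T"
  define g where "g = (\<lambda>k. e (h (d k)))"
  have be: "bij_betw e T UNIV" using to_nat_on_infinite[OF ct inf] by (simp add: e_def)
  have bd: "bij_betw d UNIV T" using bij_betw_from_nat_into[OF ct inf] by (simp add: d_def)
  have de: "d (e x) = x" if "x \<in> T" for x using that ct by (simp add: d_def e_def)
  have ed: "e (d k) = k" for k using ct inf by (simp add: d_def e_def)
  have dT: "d k \<in> T" for k using bd bij_betwE by blast
  have hT: "(h^^n) x \<in> T" if "x \<in> T" for n x
    using that by (induction n) (auto intro: bij_betwE[OF bh, rule_format])
  have bg: "bij g"
  proof -
    have "bij_betw (\<lambda>k. h (d k)) UNIV T" using bij_betw_trans[OF bd bh] by (simp add: comp_def)
    from bij_betw_trans[OF this be] show ?thesis by (simp add: g_def comp_def)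
  qed
  have gpow: "(g^^n) k = e ((h^^n) (d k))" for n k
  proof (induction n)
    case 0 then show ?case by (simp add: ed)
  next
    case (Suc n) then show ?case by (simp add: g_def de[OF hT[OF dT]])
  qed
  have fixeq: "{k. (g^^n) k = k} = e ` {x\<in>T. (h^^n) x = x}" for n
  proof (intro equalityI subsetI)
    fix k assume "k \<in> {k. (g^^n) k = k}"
    then have "e ((h^^n) (d k)) = e (d k)" by (simp add: gpow ed)
    then have "(h^^n) (d k) = d k"
      using bij_betw_imp_inj_on[OF be] hT[OF dT] dT by (meson inj_onD)
    then show "k \<in> e ` {x\<in>T. (h^^n) x = x}" using dT by (metis (mono_tags, lifting) ed image_eqI mem_Collect_eq)
  next
    fix k assume "k \<in> e ` {x\<in>T. (h^^n) x = x}"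
    then obtain x where "x \<in> T" "(h^^n) x = x" "k = e x" by auto
    then show "k \<in> {k. (g^^n) k = k}" by (simp add: gpow de)
  qed
  have inje: "inj_on e {x\<in>T. (h^^n) x = x}" for n
    using bij_betw_imp_inj_on[OF be] by (rule inj_on_subset) auto
  have R: "realizes (submetric euclidean_metric (insert 0 (range rr))) (ff g)
           (\<lambda>n. Suc (card {k. (g^^n) k = k}))"
    by (rule realize_nat[OF bg]) (simp add: fixeq fin)
  have "realizes (submetric euclidean_metric (insert 0 (range rr))) (ff g) U"
    by (rule realizes_cong[OF R]) (simp add: U fixeq card_image[OF inje])
  then show ?thesis unfolding exactly_realizable_def by blast
qed



definition ok :: "bool list \<Rightarrow> bool" where
  "ok xs \<longleftrightarrow> (\<forall>i. Suc i < length xs \<longrightarrow> \<not> (xs!i \<and> xs!Suc i))"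

definition W :: "nat \<Rightarrow> bool \<Rightarrow> bool \<Rightarrow> bool list set" where
  "W n b c = {xs. length xs = Suc n \<and> ok xs \<and> xs!0 = b \<and> xs!n = c}"

lemma ok_Cons: "ok (b # ys) \<longleftrightarrow> ok ys \<and> (ys \<noteq> [] \<longrightarrow> \<not> (b \<and> ys!0))"
  unfolding ok_def
  by (auto simp: nth_Cons split: nat.splits)

lemma W_finite: "finite (W n b c)"
proof -
  have "W n b c \<subseteq> {xs. set xs \<subseteq> UNIV \<and> length xs = Suc n}" by (auto simp: W_def)
  thus ?thesis using finite_lists_length_eq[of "UNIV :: bool set"] finite_subset by auto
qed

lemma W_0: "W 0 b c = (if b = c then {[b]} else {})"
  by (auto simp: W_def ok_def length_Suc_conv)

lemma W_Suc: "W (Suc n) b c = (\<lambda>ys. b # ys) ` (W n False c \<union> (if b then {} else W n True c))"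
proof (intro equalityI subsetI)
  fix xs assume "xs \<in> W (Suc n) b c"
  then obtain ys where xs: "xs = b # ys" and ys: "length ys = Suc n" "ok ys" "ys!n = c" "\<not>(b \<and> ys!0)"
    by (auto simp: W_def length_Suc_conv ok_Cons)
  then show "xs \<in> (\<lambda>ys. b # ys) ` (W n False c \<union> (if b then {} else W n True c))"
    by (cases "ys!0") (auto simp: W_def)
next
  fix xs assume "xs \<in> (\<lambda>ys. b # ys) ` (W n False c \<union> (if b then {} else W n True c))"
  then show "xs \<in> W (Suc n) b c"
    by (auto simp: W_def ok_Cons split: if_splits)
qed

lemma card_W_Suc_F: "card (W (Suc n) False c) = card (W n False c) + card (W n True c)"
proof -
  have "card (W (Suc n) False c) = card (W n False c \<union> W n True c)"
    by (simp add: W_Suc card_image)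
  also have "\<dots> = card (W n False c) + card (W n True c)"
    by (rule card_Un_disjoint[OF W_finite W_finite]) (auto simp: W_def)
  finally show ?thesis .
qed

lemma card_W_Suc_T: "card (W (Suc n) True c) = card (W n False c)"
  by (simp add: W_Suc card_image)

definition golden :: "(nat \<Rightarrow> bool) \<Rightarrow> bool" where
  "golden s \<longleftrightarrow> (\<forall>k. \<not> (s k \<and> s (Suc k)))"

definition G :: "nat \<Rightarrow> (nat \<Rightarrow> bool) set" where
  "G n = {s. golden s \<and> (\<forall>k. s (k + n) = s k)}"

lemma per_mult:
  fixes s :: "nat \<Rightarrow> 'a" and n m k :: nat
  assumes "\<forall>k. s (k + n) = s k" shows "s (k + m * n) = s k"
proof (induction m)
  case (Suc m)
  have "s (k + Suc m * n) = s ((k + m * n) + n)" by (simp add: algebra_simps)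
  also have "\<dots> = s (k + m * n)" using assms by blast
  finally show ?case using Suc by simp
qed simp

lemma per_mod: fixes s :: "nat \<Rightarrow> 'a" and n k :: nat shows "(\<forall>k. s (k + n) = s k) \<Longrightarrow> s k = s (k mod n)"
  using per_mult[of s n "k mod n" "k div n"] by (metis mod_div_mult_eq)

lemma card_G: assumes n: "n \<ge> 1"
  shows "card (G n) = card (W n False False) + card (W n True True)"
proof -
  define \<phi> where "\<phi> = (\<lambda>s::nat\<Rightarrow>bool. map s [0..<Suc n])"
  have inj: "inj_on \<phi> (G n)"
  proof (rule inj_onI)
    fix s t assume s: "s \<in> G n" and t: "t \<in> G n" and e: "\<phi> s = \<phi> t"
    have "s j = t j" if "j < n" for j
    proof -
      have "\<phi> s ! j = \<phi> t ! j" using e by simp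
      thus ?thesis using that by (simp add: \<phi>_def nth_map_upt del: upt_Suc)
    qed
    then have "s k = t k" for k using per_mod[of s n k] per_mod[of t n k] s t n
      by (simp add: G_def)
    then show "s = t" by auto
  qed
  have img: "\<phi> ` G n = W n False False \<union> W n True True"
  proof (intro equalityI subsetI)
    fix xs assume "xs \<in> \<phi> ` G n"
    then obtain s where s: "s \<in> G n" and xs: "xs = \<phi> s" by auto
    have sn: "s n = s 0" using s by (simp add: G_def) (metis add_0)
    have "ok xs" using s by (auto simp: ok_def xs \<phi>_def G_def golden_def nth_map_upt simp del: upt_Suc)
    moreover have "length xs = Suc n" "xs!0 = s 0" "xs!n = s 0"
      by (auto simp: xs \<phi>_def sn nth_map_upt simp del: upt_Suc)
    ultimately show "xs \<in> W n False False \<union> W n True True"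
      by (cases "s 0") (auto simp: W_def)
  next
    fix xs assume xsW: "xs \<in> W n False False \<union> W n True True"
    then have len: "length xs = Suc n" and okx: "ok xs" and ends: "xs!0 = xs!n" by (auto simp: W_def)
    define s where "s = (\<lambda>k. xs ! (k mod n))"
    have per: "\<forall>k. s (k + n) = s k" by (simp add: s_def)
    have gold: "golden s" unfolding golden_def
    proof
      fix k
      define i where "i = k mod n"
      have i: "i < n" using n by (simp add: i_def)
      show "\<not> (s k \<and> s (Suc k))"
      proof (cases "Suc i < n")
        case True
        then have "Suc k mod n = Suc i" by (simp add: i_def mod_Suc)
        then show ?thesis using okx len True by (simp add: s_def ok_def i_def[symmetric])
      next
        case False
        then have "Suc i = n" using i by simp
        then have "Suc k mod n = 0" by (simp add: i_def mod_Suc)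
        then show ?thesis using okx len ends \<open>Suc i = n\<close>
          by (simp add: s_def ok_def i_def[symmetric]) (metis lessI)
      qed
    qed
    have "\<phi> s = xs"
    proof (rule nth_equalityI)
      show "length (\<phi> s) = length xs" by (simp add: \<phi>_def len)
      fix j assume "j < length (\<phi> s)"
      then have j: "j \<le> n" by (simp add: \<phi>_def)
      show "\<phi> s ! j = xs ! j"
      proof (cases "j = n")
        case True then show ?thesis using ends by (simp add: \<phi>_def s_def nth_map_upt del: upt_Suc)
      next
        case False then show ?thesis using j by (simp add: \<phi>_def s_def nth_map_upt del: upt_Suc)
      qed
    qed
    then show "xs \<in> \<phi> ` G n" using per gold by (auto simp: G_def)
  qed
  have "card (G n) = card (W n False False \<union> W n True True)"
    using card_image[OF inj] img by simp
  also have "\<dots> = card (W n False False) + card (W n True True)"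
    by (rule card_Un_disjoint[OF W_finite W_finite]) (auto simp: W_def)
  finally show ?thesis .
qed

lemma G_rec: "card (G (n + 3)) = card (G (n + 2)) + card (G (n + 1))"
  by (simp add: card_G numeral_eq_Suc card_W_Suc_F card_W_Suc_T)

lemma G_1: "card (G 1) = 1"
  by (simp add: card_G card_W_Suc_F card_W_Suc_T W_0)
lemma G_2: "card (G 2) = 3"
  by (simp add: card_G numeral_eq_Suc card_W_Suc_F card_W_Suc_T W_0)



definition P :: "(nat \<Rightarrow> bool) set" where
  "P = {s. golden s \<and> (\<exists>p>0. \<forall>k. s (k + p) = s k)}"

definition sh :: "(nat \<Rightarrow> bool) \<Rightarrow> (nat \<Rightarrow> bool)" where
  "sh s = (\<lambda>k. s (Suc k))"

definition TT :: "nat \<Rightarrow> (nat \<times> (nat \<Rightarrow> bool)) set" where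
  "TT a = ({..<a} \<times> P) - {(0, \<lambda>_. False)}"

definition hh :: "nat \<times> (nat \<Rightarrow> bool) \<Rightarrow> nat \<times> (nat \<Rightarrow> bool)" where
  "hh x = (fst x, sh (snd x))"

lemma sh_pow: "(sh^^n) s = (\<lambda>k. s (k + n))"
  by (induction n) (auto simp: sh_def)

lemma hh_pow: "(hh^^n) x = (fst x, (sh^^n) (snd x))"
  by (induction n) (auto simp: hh_def)

lemma G_P: "n \<ge> 1 \<Longrightarrow> G n \<subseteq> P"
  by (auto simp: G_def P_def intro!: exI[of _ n])

lemma z_G: "(\<lambda>_. False) \<in> G n"
  by (simp add: G_def golden_def)

lemma fixT: assumes "n \<ge> 1"
  shows "{x\<in>TT a. (hh^^n) x = x} = ({..<a} \<times> G n) - {(0, \<lambda>_. False)}"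
proof -
  have e: "(sh^^n) s = s \<longleftrightarrow> (\<forall>k. s (k + n) = s k)" for s
    by (simp add: sh_pow fun_eq_iff)
  show ?thesis using G_P[OF assms]
    by (auto simp: TT_def hh_pow e G_def P_def)
qed

lemma card_G_pos: "n \<ge> 1 \<Longrightarrow> card (G n) \<ge> 1"
proof (induction n rule: less_induct)
  case (less n)
  show ?case
  proof (cases "n \<le> 2")
    case True
    then have "n = 1 \<or> n = 2" using less.prems by linarith
    then show ?thesis using G_1 G_2 by auto
  next
    case False
    define m where "m = n - 3"
    have m: "n = m + 3" using False by (simp add: m_def)
    then show ?thesis using G_rec[of m] less.IH[of "m+2"] by simp
  qed
qed

lemma finite_G: "n \<ge> 1 \<Longrightarrow> finite (G n)"
  using card_G_pos card.infinite by fastforce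

lemma card_fixT: assumes "n \<ge> 1" "a > 0"
  shows "card {x\<in>TT a. (hh^^n) x = x} = a * card (G n) - 1"
  using assms by (simp add: fixT card_Diff_singleton card_cartesian_product finite_G z_G)

lemma finite_fixT: assumes "n \<ge> 1"
  shows "finite {x\<in>TT a. (hh^^n) x = x}"
  using assms by (simp add: fixT finite_G)

lemma countable_P: "countable P"
proof -
  have "P \<subseteq> (\<lambda>(p, xs). \<lambda>k. xs ! (k mod p)) ` (UNIV :: (nat \<times> bool list) set)"
  proof
    fix s assume "s \<in> P"
    then obtain p where p: "p > 0" "\<forall>k. s (k + p) = s k" by (auto simp: P_def)
    have "s = (\<lambda>k. (map s [0..<p]) ! (k mod p))"
      using per_mod[of s p] p by (auto simp: fun_eq_iff)
    then show "s \<in> (\<lambda>(p, xs). \<lambda>k. xs ! (k mod p)) ` UNIV" by (auto simp: image_iff)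
  qed
  thus ?thesis by (rule countable_subset) simp
qed

lemma countable_TT: "countable (TT a)"
  unfolding TT_def using countable_P by (intro countable_Diff countable_SIGMA) auto

lemma infinite_TT: assumes "a > 0" shows "infinite (TT a)"
proof -
  define q where "q = (\<lambda>p::nat. (0::nat, \<lambda>k::nat. k mod p = 0))"
  have "inj_on q {2..}"
  proof (rule inj_onI)
    fix p p' assume "p \<in> {2..}" "p' \<in> {2..}" "q p = q p'"
    then have "\<forall>k. (k mod p = 0) = (k mod p' = 0)" by (auto simp: q_def fun_eq_iff)
    then have "p dvd p'" "p' dvd p" by (metis mod_self dvd_eq_mod_eq_0)+
    then show "p = p'" by (simp add: dvd_antisym)
  qed
  moreover have "q ` {2..} \<subseteq> TT a"
  proof
    fix x assume "x \<in> q ` {2..}"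
    then obtain p where p: "p \<ge> 2" "x = q p" by auto
    have "golden (\<lambda>k. k mod p = 0)" unfolding golden_def
    proof
      fix k show "\<not> (k mod p = 0 \<and> Suc k mod p = 0)"
        using p(1) by (auto simp: mod_Suc)
    qed
    moreover have "\<forall>k. ((k + p) mod p = 0) = (k mod p = 0)" by simp
    ultimately show "x \<in> TT a" using p assms
      by (auto simp: q_def TT_def P_def fun_eq_iff intro!: exI[of _ p])
  qed
  moreover have "infinite {2::nat..}" by (rule infinite_Ici)
  ultimately show ?thesis
    using finite_imageD finite_subset by blast
qed



lemma sh_P: assumes "s \<in> P" shows "sh s \<in> P"
proof -
  from assms obtain p where "golden s" "p > 0" "\<forall>k. s (k + p) = s k" by (auto simp: P_def)
  moreover have "\<forall>k. sh s (k + p) = sh s k"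
  proof
    fix k show "sh s (k + p) = sh s k" using \<open>\<forall>k. s (k + p) = s k\<close>[rule_format, of "Suc k"] by (simp add: sh_def)
  qed
  ultimately show ?thesis unfolding P_def golden_def by (auto simp: sh_def)
qed

lemma sh_pow_P: "s \<in> P \<Longrightarrow> (sh^^n) s \<in> P"
  by (induction n) (auto simp: sh_P)

lemma P_per: assumes "s \<in> P" obtains p where "p > 0" "\<forall>k. s (k + p) = s k"
  using assms by (auto simp: P_def)

lemma sh_inj: assumes "s \<in> P" "t \<in> P" "sh s = sh t" shows "s = t"
proof -
  obtain p where p: "p > 0" "\<forall>k. s (k + p) = s k" using P_per[OF assms(1)] by blast
  obtain q where q: "q > 0" "\<forall>k. t (k + q) = t k" using P_per[OF assms(2)] by blast
  have "s k = t k" for k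
  proof -
    have s1: "s (k + p * q) = s k" using per_mult[OF p(2), of k q] by (simp only: mult.commute)
    have t1: "t (k + p * q) = t k" using per_mult[OF q(2), of k p] .
    have "p * q > 0" using p q by simp
    then have pq: "k + p * q = Suc (k + p * q - 1)" by linarith
    have "sh s (k + p * q - 1) = sh t (k + p * q - 1)" using assms(3) by simp
    then have "s (Suc (k + p * q - 1)) = t (Suc (k + p * q - 1))" by (simp only: sh_def)
    then have "s (k + p * q) = t (k + p * q)" using pq by simp
    then show ?thesis using s1 t1 by simp
  qed
  then show ?thesis by auto
qed

lemma sh_surj: assumes "s \<in> P" obtains t where "t \<in> P" "sh t = s"
proof -
  obtain p where p: "p > 0" "\<forall>k. s (k + p) = s k" using P_per[OF assms] by blast
  define t where "t = (sh^^(p - 1)) s"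
  have t: "t = (\<lambda>k. s (k + (p - 1)))" by (simp add: t_def sh_pow)
  have "t \<in> P" unfolding t_def using assms by (rule sh_pow_P)
  moreover have "sh t = s"
  proof
    fix k
    have "sh t k = s (Suc k + (p - 1))" by (simp add: t sh_def)
    also have "Suc k + (p - 1) = k + p" using p(1) by simp
    also have "s (k + p) = s k" using p(2) by blast
    finally show "sh t k = s k" .
  qed
  ultimately show ?thesis using that by blast
qed

lemma bij_hh: "bij_betw hh (TT a) (TT a)"
proof -
  have z: "sh s \<noteq> (\<lambda>_. False)" if sP: "s \<in> P" and snz: "s \<noteq> (\<lambda>_. False)" for s
  proof
    assume e: "sh s = (\<lambda>_. False)"
    obtain p where p: "p > 0" "\<forall>k. s (k + p) = s k" using P_per[OF sP] by blast
    have "s k = False" for k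
    proof (cases k)
      case 0
      have "s 0 = s (0 + p)" using p(2) by (metis (no_types))
      also have "\<dots> = s (Suc (p - 1))" using p(1) by simp
      also have "\<dots> = sh s (p - 1)" by (simp add: sh_def)
      finally show ?thesis using 0 e by simp
    next
      case (Suc j)
      have "s (Suc j) = sh s j" by (simp add: sh_def)
      then show ?thesis using Suc e by simp
    qed
    then show False using snz by auto
  qed
  show ?thesis
  proof (rule bij_betw_imageI)
    show "inj_on hh (TT a)"
    proof (rule inj_onI)
      fix x y assume x: "x \<in> TT a" and y: "y \<in> TT a" and e: "hh x = hh y"
      have "snd x \<in> P" "snd y \<in> P" using x y by (auto simp: TT_def)
      moreover have "fst x = fst y" "sh (snd x) = sh (snd y)" using e by (simp_all add: hh_def)
      ultimately show "x = y" using sh_inj by (simp add: prod_eq_iff)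
    qed
    show "hh ` TT a = TT a"
    proof (intro equalityI subsetI)
      fix y assume "y \<in> hh ` TT a"
      then obtain x where x: "x \<in> TT a" "y = hh x" by blast
      have "snd x \<in> P" "fst x < a" "x \<noteq> (0, \<lambda>_. False)" using x by (auto simp: TT_def)
      moreover have "snd x \<noteq> (\<lambda>_. False) \<or> fst x \<noteq> 0" using calculation(3) by (auto simp: prod_eq_iff)
      ultimately show "y \<in> TT a" using x(2) z[of "snd x"] sh_P[of "snd x"]
        unfolding TT_def hh_def by auto
    next
      fix y assume y: "y \<in> TT a"
      obtain i s where yis: "y = (i, s)" by (cases y)
      have iss: "y = (i, s)" "i < a" "s \<in> P" "(i, s) \<noteq> (0, \<lambda>_. False)"
        using y yis by (auto simp: TT_def)
      obtain t where t: "t \<in> P" "sh t = s" using sh_surj[OF iss(3)] by blast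
      have "(i, t) \<noteq> (0, \<lambda>_. False)" using iss t by (auto simp: sh_def)
      then have "(i, t) \<in> TT a" using iss t by (auto simp: TT_def)
      moreover have "hh (i, t) = y" using iss t by (simp add: hh_def)
      ultimately show "y \<in> hh ` TT a" by blast
    qed
  qed
qed

theorem lemma2:
  fixes a :: nat and U :: "nat \<Rightarrow> nat"
  assumes "a > 0"
    and "U 1 = a" and "U 2 = 3 * a"
    and "\<And>n. n \<ge> 1 \<Longrightarrow> U (n + 2) = U (n + 1) + U n"
  shows "exactly_realizable U"
proof -
  have UG: "U n = a * card (G n)" if "n \<ge> 1" for n
    using that
  proof (induction n rule: less_induct)
    case (less n)
    show ?case
    proof (cases "n \<le> 2")
      case True
      then have "n = 1 \<or> n = 2" using less.prems by linarith
      then show ?thesis using G_1 G_2 assms(2,3) by auto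
    next
      case False
      define m where "m = n - 3"
      have m: "n = m + 3" using False by (simp add: m_def)
      have "U n = U (m + 2) + U (m + 1)" using assms(4)[of "m + 1"] unfolding m by (simp add: numeral_3_eq_3)
      also have "\<dots> = a * card (G (m + 2)) + a * card (G (m + 1))"
        using less.IH[of "m + 2"] less.IH[of "m + 1"] m by simp
      also have "\<dots> = a * card (G n)" using G_rec[of m] m by (simp add: algebra_simps)
      finally show ?thesis .
    qed
  qed
  show ?thesis
  proof (rule transfer[OF countable_TT infinite_TT[OF assms(1)] bij_hh])
    show "finite {x \<in> TT a. (hh ^^ n) x = x}" if "n \<ge> 1" for n using finite_fixT[OF that] .
    fix n :: nat assume n: "n \<ge> 1"
    have "a * card (G n) \<ge> 1" using card_G_pos[OF n] assms(1) by simp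
    then show "U n = Suc (card {x \<in> TT a. (hh ^^ n) x = x})"
      using card_fixT[OF n assms(1)] UG[OF n] by simp
  qed
qed

end
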